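(* Let $A,B,C\in\mathrm{End}(V)$. Then $A,B,C$ is an LR triple on $V$ if and only if: (i) each of $A,B,C$ is Nil; (ii) the flag $(A^{d-i}V)_{i=0}^d$ is raised by $B$ and by $C$; (iii) the flag $(B^{d-i}V)_{i=0}^d$ is raised by $C$ and by $A$; (iv) the flag $(C^{d-i}V)_{i=0}^d$ is raised by $A$ and by $B$.
   Context: Let $V$ be a vector space over a field $\mathbb F$ with $\dim V=d+1$. $X\in\mathrm{End}(V)$ is Nil if $X^{d+1}=0$ and $X^d\ne0$ (then $(X^{d-i}V)_{i=0}^d$ is a flag). A flag on $V$ is a sequence $(U_i)_{i=0}^d$ of subspaces with $\dim U_i=i+1$ and $U_{i-1}\subseteq U_i$. $X$ raises the flag if $U_i+XU_i=U_{i+1}$ for $0\le i\le d-1$. A decomposition of $V$ is a sequence $(V_i)_{i=0}^d$ of one-dimensional subspaces with $V=\bigoplus V_i$; $X$ lowers it if $XV_i=V_{i-1}$ ($1\le i\le d$), $XV_0=0$; raises it if $XV_i=V_{i+1}$ ($0\le i\le d-1$), $XV_d=0$. An ordered pair $X,Y$ is an LR pair if some decomposition is lowered by $X$ and raised by $Y$. An LR triple on $V$ is $A,B,C$ such that every ordered pair of distinct elements among $A,B,C$ is an LR pair on $V$. *)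

theory Defs
  imports "HOL.Vector_Spaces"
begin

text \<open>V is the whole carrier type 'v, a vector space over the field 'f via scale.
  Endomorphisms of V are the linear maps 'v => 'v.\<close>

definition is_Nil :: "nat \<Rightarrow> ('v::ab_group_add \<Rightarrow> 'v) \<Rightarrow> bool" where
  "is_Nil d X \<longleftrightarrow> X ^^ (d+1) = (\<lambda>_. 0) \<and> X ^^ d \<noteq> (\<lambda>_. 0)"

definition is_flag :: "('f::field \<Rightarrow> 'v::ab_group_add \<Rightarrow> 'v) \<Rightarrow> nat \<Rightarrow> (nat \<Rightarrow> 'v set) \<Rightarrow> bool" where
  "is_flag scale d U \<longleftrightarrow>
     (\<forall>i\<le>d. module.subspace scale (U i) \<and> vector_space.dim scale (U i) = i + 1) \<and>
     (\<forall>i. 1 \<le> i \<and> i \<le> d \<longrightarrow> U (i - 1) \<subseteq> U i)"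

definition subspace_sum :: "'v::ab_group_add set \<Rightarrow> 'v set \<Rightarrow> 'v set" where
  "subspace_sum U W = {u + w | u w. u \<in> U \<and> w \<in> W}"

definition raises_flag :: "nat \<Rightarrow> ('v::ab_group_add \<Rightarrow> 'v) \<Rightarrow> (nat \<Rightarrow> 'v set) \<Rightarrow> bool" where
  "raises_flag d X U \<longleftrightarrow> (\<forall>i<d. subspace_sum (U i) (X ` U i) = U (i + 1))"

definition flag_of :: "nat \<Rightarrow> ('v \<Rightarrow> 'v) \<Rightarrow> nat \<Rightarrow> 'v set" where
  "flag_of d X = (\<lambda>i. range (X ^^ (d - i)))"

definition is_decomposition :: "('f::field \<Rightarrow> 'v::ab_group_add \<Rightarrow> 'v) \<Rightarrow> nat \<Rightarrow> (nat \<Rightarrow> 'v set) \<Rightarrow> bool" where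
  "is_decomposition scale d W \<longleftrightarrow>
     (\<forall>i\<le>d. module.subspace scale (W i) \<and> vector_space.dim scale (W i) = 1) \<and>
     module.span scale (\<Union>i\<le>d. W i) = UNIV \<and>
     (\<forall>i\<le>d. W i \<inter> module.span scale (\<Union>j\<in>{..d} - {i}. W j) = {0})"

definition lowers_dec :: "nat \<Rightarrow> ('v::ab_group_add \<Rightarrow> 'v) \<Rightarrow> (nat \<Rightarrow> 'v set) \<Rightarrow> bool" where
  "lowers_dec d X W \<longleftrightarrow> (\<forall>i. 1 \<le> i \<and> i \<le> d \<longrightarrow> X ` W i = W (i - 1)) \<and> X ` W 0 = {0}"

definition raises_dec :: "nat \<Rightarrow> ('v::ab_group_add \<Rightarrow> 'v) \<Rightarrow> (nat \<Rightarrow> 'v set) \<Rightarrow> bool" where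
  "raises_dec d X W \<longleftrightarrow> (\<forall>i<d. X ` W i = W (i + 1)) \<and> X ` W d = {0}"

definition LR_pair :: "('f::field \<Rightarrow> 'v::ab_group_add \<Rightarrow> 'v) \<Rightarrow> nat \<Rightarrow> ('v \<Rightarrow> 'v) \<Rightarrow> ('v \<Rightarrow> 'v) \<Rightarrow> bool" where
  "LR_pair scale d X Y \<longleftrightarrow> (\<exists>W. is_decomposition scale d W \<and> lowers_dec d X W \<and> raises_dec d Y W)"

definition LR_triple :: "('f::field \<Rightarrow> 'v::ab_group_add \<Rightarrow> 'v) \<Rightarrow> nat \<Rightarrow> ('v \<Rightarrow> 'v) \<Rightarrow> ('v \<Rightarrow> 'v) \<Rightarrow> ('v \<Rightarrow> 'v) \<Rightarrow> bool" where
  "LR_triple scale d A B C \<longleftrightarrow>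
     LR_pair scale d A B \<and> LR_pair scale d B A \<and>
     LR_pair scale d B C \<and> LR_pair scale d C B \<and>
     LR_pair scale d A C \<and> LR_pair scale d C A"

end

theory Submission imports Defs begin

context vector_space begin

lemma lin_img: "Vector_Spaces.linear scale scale f \<Longrightarrow> f ` span S = span (f ` S)"
  by (metis linear_iff_module_hom module_hom.span_image)

lemma lin_0: "Vector_Spaces.linear scale scale f \<Longrightarrow> f 0 = 0"
  by (metis linear_iff_module_hom module_hom.zero)

lemma lin_scale: "Vector_Spaces.linear scale scale f \<Longrightarrow> f (a *s x) = a *s f x"
  by (metis linear_iff_module_hom module_hom.scale)

lemma lin_pow: "Vector_Spaces.linear scale scale f \<Longrightarrow> Vector_Spaces.linear scale scale (f ^^ n)"
proof (induction n)
  case 0 then show ?case using linear_id by (simp add: id_def)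
next
  case (Suc n) then show ?case
    by (simp only: funpow.simps(2)) (rule Vector_Spaces.linear_compose[OF Suc.IH Suc.prems])
qed

lemma lin_eq0_span: "Vector_Spaces.linear scale scale f \<Longrightarrow> (\<And>x. x \<in> B \<Longrightarrow> f x = 0) \<Longrightarrow> span B = UNIV \<Longrightarrow> f = (\<lambda>_. 0)"
  by (metis (no_types, lifting) ext UNIV_I linear_iff_module_hom module_hom.eq_0_on_span)

lemma span_scale_single: "a \<noteq> 0 \<Longrightarrow> span {a *s x} = span {x}"
proof -
  assume a: "a \<noteq> 0"
  have "x = inverse a *s (a *s x)" using a by simp
  then have "x \<in> span {a *s x}" by (metis span_base span_scale singletonI)
  moreover have "a *s x \<in> span {x}" by (simp add: span_base span_scale)
  ultimately show ?thesis by (simp add: span_eq)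
qed

lemma subspace_sum_span: "Vector_Spaces.linear scale scale f \<Longrightarrow>
   subspace_sum (span A) (f ` span A) = span (A \<union> f ` A)"
  by (simp add: subspace_sum_def span_Un lin_img)

end

locale bdata = finite_dimensional_vector_space +
  fixes d :: nat and X Y :: "'b \<Rightarrow> 'b" and w :: "nat \<Rightarrow> 'b" and c :: "nat \<Rightarrow> 'a"
  assumes linX: "Vector_Spaces.linear scale scale X"
    and linY: "Vector_Spaces.linear scale scale Y"
    and indep: "independent (w ` {..d})"
    and injw: "inj_on w {..d}"
    and spanw: "span (w ` {..d}) = UNIV"
    and Yw: "\<And>i. i < d \<Longrightarrow> Y (w i) = w (Suc i)"
    and Ywd: "Y (w d) = 0"
    and Xw0: "X (w 0) = 0"
    and Xw: "\<And>i. 1 \<le> i \<Longrightarrow> i \<le> d \<Longrightarrow> X (w i) = c i *s w (i - 1)"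
    and cnz: "\<And>i. 1 \<le> i \<Longrightarrow> i \<le> d \<Longrightarrow> c i \<noteq> 0"
begin

lemma wnz: "i \<le> d \<Longrightarrow> w i \<noteq> 0"
  by (metis indep dependent_zero atMost_iff image_eqI)

lemma Xpow: "i \<le> d \<Longrightarrow> k \<le> i \<Longrightarrow> \<exists>a. a \<noteq> 0 \<and> (X ^^ k) (w i) = a *s w (i - k)"
proof (induction k)
  case 0 then show ?case by (intro exI[of _ 1]) simp
next
  case (Suc k)
  then obtain a where a: "a \<noteq> 0" "(X ^^ k) (w i) = a *s w (i - k)" by auto
  have "(X ^^ Suc k) (w i) = a *s X (w (i - k))" using a linX by (simp add: lin_scale)
  also have "\<dots> = (a * c (i - k)) *s w (i - Suc k)" using Suc.prems
    by (simp add: Xw scale_scale)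
  finally show ?case using a cnz[of "i - k"] Suc.prems by (intro exI[of _ "a * c (i - k)"]) auto
qed

lemma Xpow0: "i \<le> d \<Longrightarrow> i < k \<Longrightarrow> (X ^^ k) (w i) = 0"
proof -
  assume i: "i \<le> d" "i < k"
  have "(X ^^ (Suc i + m)) (w i) = 0" for m
  proof (induction m)
    case 0
    obtain a where "(X ^^ i) (w i) = a *s w 0" using Xpow[OF i(1), of i] by auto
    then show ?case using linX by (simp add: lin_scale Xw0)
  next
    case (Suc m) then show ?case using linX by (simp add: lin_0)
  qed
  from this[of "k - Suc i"] i show ?thesis by simp
qed

lemma Ypow: "i + k \<le> d \<Longrightarrow> (Y ^^ k) (w i) = w (i + k)"
  by (induction k) (auto simp: Yw)

lemma Ypow0: "i \<le> d \<Longrightarrow> d < i + k \<Longrightarrow> (Y ^^ k) (w i) = 0"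
proof -
  assume i: "i \<le> d" "d < i + k"
  have "(Y ^^ (Suc (d - i) + m)) (w i) = 0" for m
  proof (induction m)
    case 0 then show ?case using Ypow[of i "d - i"] i by (simp add: Ywd)
  next
    case (Suc m) then show ?case using linY by (simp add: lin_0)
  qed
  from this[of "k - Suc (d - i)"] i show ?thesis by simp
qed

lemma rangeX: "k \<le> d \<Longrightarrow> range (X ^^ k) = span (w ` {..d - k})"
proof -
  assume k: "k \<le> d"
  have "range (X ^^ k) = (X ^^ k) ` span (w ` {..d})" by (simp add: spanw)
  also have "\<dots> = span ((X ^^ k) ` w ` {..d})" using lin_pow[OF linX] by (simp add: lin_img)
  also have "\<dots> = span (w ` {..d - k})"
  proof (unfold span_eq, intro conjI subsetI)
    fix x assume "x \<in> (X ^^ k) ` w ` {..d}"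
    then obtain i where i: "i \<le> d" "x = (X ^^ k) (w i)" by auto
    show "x \<in> span (w ` {..d - k})"
    proof (cases "k \<le> i")
      case True
      then obtain a where a: "x = a *s w (i - k)" using Xpow i by blast
      have "w (i - k) \<in> span (w ` {..d - k})" using i by (intro span_base) auto
      then show ?thesis using a by (simp add: span_scale)
    next
      case False then show ?thesis using Xpow0 i by (simp add: span_zero)
    qed
  next
    fix x assume "x \<in> w ` {..d - k}"
    then obtain j where j: "j \<le> d - k" "x = w j" by auto
    have jk: "j + k \<le> d" using j k by simp
    obtain a where a: "a \<noteq> 0" "(X ^^ k) (w (j + k)) = a *s w j" using Xpow[OF jk, of k] by auto
    have "x = inverse a *s ((X ^^ k) (w (j + k)))" using a j by simp
    moreover have "(X ^^ k) (w (j + k)) \<in> span ((X ^^ k) ` w ` {..d})"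
      using j k by (intro span_base) auto
    ultimately show "x \<in> span ((X ^^ k) ` w ` {..d})" by (simp add: span_scale)
  qed
  finally show ?thesis .
qed

lemma rangeY: "k \<le> d \<Longrightarrow> range (Y ^^ k) = span (w ` {k..d})"
proof -
  assume k: "k \<le> d"
  have "range (Y ^^ k) = (Y ^^ k) ` span (w ` {..d})" by (simp add: spanw)
  also have "\<dots> = span ((Y ^^ k) ` w ` {..d})" using lin_pow[OF linY] by (simp add: lin_img)
  also have "\<dots> = span (w ` {k..d})"
  proof (unfold span_eq, intro conjI subsetI)
    fix x assume "x \<in> (Y ^^ k) ` w ` {..d}"
    then obtain i where i: "i \<le> d" "x = (Y ^^ k) (w i)" by auto
    show "x \<in> span (w ` {k..d})"
    proof (cases "i + k \<le> d")
      case True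
      then show ?thesis using i Ypow by (auto intro!: span_base)
    next
      case False then show ?thesis using Ypow0 i by (simp add: span_zero)
    qed
  next
    fix x assume "x \<in> w ` {k..d}"
    then obtain j where j: "k \<le> j" "j \<le> d" "x = w j" by auto
    have "x = (Y ^^ k) (w (j - k))" using Ypow[of "j - k" k] j by simp
    then show "x \<in> span ((Y ^^ k) ` w ` {..d})" using j by (intro span_base) auto
  qed
  finally show ?thesis .
qed

lemma flagX: "i \<le> d \<Longrightarrow> flag_of d X i = span (w ` {..i})"
  using rangeX[of "d - i"] by (simp add: flag_of_def)

lemma flagY: "i \<le> d \<Longrightarrow> flag_of d Y i = span (w ` {d - i..d})"
  using rangeY[of "d - i"] by (simp add: flag_of_def)

lemma raisesYX: "raises_flag d Y (flag_of d X)"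
  unfolding raises_flag_def
proof (intro allI impI)
  fix i assume i: "i < d"
  have "w ` {..i} \<union> Y ` w ` {..i} = w ` {..Suc i}"
  proof (intro equalityI subsetI)
    fix x assume "x \<in> w ` {..i} \<union> Y ` w ` {..i}"
    then show "x \<in> w ` {..Suc i}" using i by (auto simp: Yw)
  next
    fix x assume "x \<in> w ` {..Suc i}"
    then obtain j where j: "j \<le> Suc i" "x = w j" by auto
    show "x \<in> w ` {..i} \<union> Y ` w ` {..i}"
    proof (cases "j = Suc i")
      case True
      then have "x = Y (w i)" using i j Yw[of i] by simp
      then show ?thesis by blast
    next
      case False then show ?thesis using j by auto
    qed
  qed
  then show "subspace_sum (flag_of d X i) (Y ` flag_of d X i) = flag_of d X (i + 1)"
    using i by (simp add: flagX subspace_sum_span[OF linY])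
qed

lemma raisesXY: "raises_flag d X (flag_of d Y)"
  unfolding raises_flag_def
proof (intro allI impI)
  fix i assume i: "i < d"
  have "span (w ` {d - i..d} \<union> X ` w ` {d - i..d}) = span (w ` {d - (i + 1)..d})"
  proof (unfold span_eq, intro conjI subsetI)
    fix x assume "x \<in> w ` {d - i..d} \<union> X ` w ` {d - i..d}"
    then show "x \<in> span (w ` {d - (i + 1)..d})"
    proof
      assume "x \<in> w ` {d - i..d}" then show ?thesis by (auto intro!: span_base)
    next
      assume "x \<in> X ` w ` {d - i..d}"
      then obtain j where j: "d - i \<le> j" "j \<le> d" "x = X (w j)" by auto
      then have x: "x = c j *s w (j - 1)" using i by (simp add: Xw)
      have "j - 1 \<in> {d - (i + 1)..d}" using j by auto
      then have "w (j - 1) \<in> span (w ` {d - (i + 1)..d})" by (intro span_base) blast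
      then show ?thesis using x by (simp add: span_scale)
    qed
  next
    fix x assume "x \<in> w ` {d - (i + 1)..d}"
    then obtain j where j: "d - (i + 1) \<le> j" "j \<le> d" "x = w j" by auto
    show "x \<in> span (w ` {d - i..d} \<union> X ` w ` {d - i..d})"
    proof (cases "d - i \<le> j")
      case True then show ?thesis using j by (auto intro!: span_base)
    next
      case False
      then have jj: "j = d - i - 1" using j by auto
      have "X (w (d - i)) = c (d - i) *s w j" using i jj by (simp add: Xw)
      then have "x = inverse (c (d - i)) *s X (w (d - i))" using cnz[of "d - i"] i j by simp
      moreover have "X (w (d - i)) \<in> span (w ` {d - i..d} \<union> X ` w ` {d - i..d})"
        by (intro span_base) auto
      ultimately show ?thesis by (simp add: span_scale)
    qed
  qed
  then show "subspace_sum (flag_of d Y i) (X ` flag_of d Y i) = flag_of d Y (i + 1)"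
    using i by (simp add: flagY subspace_sum_span[OF linX])
qed

lemma NilX: "is_Nil d X"
  unfolding is_Nil_def
proof
  show "X ^^ (d + 1) = (\<lambda>_. 0)"
  proof (rule lin_eq0_span[OF lin_pow[OF linX] _ spanw])
    fix x assume "x \<in> w ` {..d}"
    then obtain i where "i \<le> d" "x = w i" by auto
    then show "(X ^^ (d + 1)) x = 0" using Xpow0[of i "d + 1"] by simp
  qed
  obtain a where "a \<noteq> 0" "(X ^^ d) (w d) = a *s w 0" using Xpow[of d d] by auto
  then have "(X ^^ d) (w d) \<noteq> 0" using wnz[of 0] by simp
  then show "X ^^ d \<noteq> (\<lambda>_. 0)" by auto
qed

lemma NilY: "is_Nil d Y"
  unfolding is_Nil_def
proof
  show "Y ^^ (d + 1) = (\<lambda>_. 0)"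
  proof (rule lin_eq0_span[OF lin_pow[OF linY] _ spanw])
    fix x assume "x \<in> w ` {..d}"
    then obtain i where "i \<le> d" "x = w i" by auto
    then show "(Y ^^ (d + 1)) x = 0" using Ypow0[of i "d + 1"] by simp
  qed
  have "(Y ^^ d) (w 0) \<noteq> 0" using Ypow[of 0 d] wnz[of d] by simp
  then show "Y ^^ d \<noteq> (\<lambda>_. 0)" by auto
qed

lemma LR: "LR_pair scale d X Y"
  unfolding LR_pair_def
proof (intro exI conjI)
  let ?W = "\<lambda>i. span {w i}"
  show "is_decomposition scale d ?W"
    unfolding is_decomposition_def
  proof (intro conjI allI impI)
    fix i assume i: "i \<le> d"
    show "subspace (span {w i})" by simp
    show "dim (span {w i}) = 1" using wnz[OF i] by simp
    have B: "span (\<Union>j\<in>{..d} - {i}. span {w j}) = span (w ` {..d} - {w i})"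
    proof (unfold span_eq, intro conjI subsetI)
      fix x assume "x \<in> (\<Union>j\<in>{..d} - {i}. span {w j})"
      then obtain j where j: "j \<le> d" "j \<noteq> i" "x \<in> span {w j}" by auto
      have "w j \<noteq> w i" using injw i j by (auto dest: inj_onD)
      then have "span {w j} \<subseteq> span (w ` {..d} - {w i})" using j by (intro span_mono) auto
      then show "x \<in> span (w ` {..d} - {w i})" using j by blast
    next
      fix x assume "x \<in> w ` {..d} - {w i}"
      then obtain j where j: "j \<le> d" "j \<noteq> i" "x = w j" by auto
      then show "x \<in> span (\<Union>j\<in>{..d} - {i}. span {w j})"
        by (intro span_base) (auto intro: span_base)
    qed
    show "span {w i} \<inter> span (\<Union>j\<in>{..d} - {i}. span {w j}) = {0}"
    proof (intro equalityI subsetI)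
      fix x assume x: "x \<in> span {w i} \<inter> span (\<Union>j\<in>{..d} - {i}. span {w j})"
      then obtain k where k: "x = k *s w i" by (auto simp: span_singleton)
      show "x \<in> {0}"
      proof (rule ccontr)
        assume "x \<notin> {0}"
        then have "k \<noteq> 0" using k by auto
        then have "w i = inverse k *s x" using k by simp
        then have "w i \<in> span (w ` {..d} - {w i})" using x B by (simp add: span_scale)
        then show False using indep i unfolding dependent_def by auto
      qed
    qed (simp add: span_zero)
  next
    show "span (\<Union>i\<le>d. span {w i}) = UNIV"
    proof -
      have "w ` {..d} \<subseteq> (\<Union>i\<le>d. span {w i})" by (auto intro: span_base)
      then have "span (w ` {..d}) \<subseteq> span (\<Union>i\<le>d. span {w i})" by (rule span_mono)
      then show ?thesis using spanw by auto
    qed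
  qed
  show "lowers_dec d X ?W"
    unfolding lowers_dec_def
  proof (intro conjI allI impI)
    fix i assume i: "1 \<le> i \<and> i \<le> d"
    show "X ` span {w i} = span {w (i - 1)}"
      using i cnz[of i] by (simp add: lin_img[OF linX] Xw span_scale_single)
  next
    show "X ` span {w 0} = {0}" by (simp add: lin_img[OF linX] Xw0)
  qed
  show "raises_dec d Y ?W"
    unfolding raises_dec_def
    by (simp add: lin_img[OF linY] Yw Ywd)
qed

end

context vector_space begin

lemma span_Int_indep:
  assumes B: "independent B" and A1: "A1 \<subseteq> B" and A2: "A2 \<subseteq> B"
    and x1: "x \<in> span A1" and x2: "x \<in> span A2"
  shows "x \<in> span (A1 \<inter> A2)"
proof -
  have r1: "representation B x = representation A1 x" by (rule representation_extend[OF B x1 A1])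
  have r2: "representation B x = representation A2 x" by (rule representation_extend[OF B x2 A2])
  have xB: "x \<in> span B" using span_mono[OF A1] x1 by auto
  have "x = (\<Sum>b | representation B x b \<noteq> 0. representation B x b *s b)"
    using sum_nonzero_representation_eq[OF B xB] by simp
  also have "\<dots> \<in> span (A1 \<inter> A2)"
  proof (rule span_sum)
    fix b assume "b \<in> {b. representation B x b \<noteq> 0}"
    then have "representation A1 x b \<noteq> 0" "representation A2 x b \<noteq> 0" using r1 r2 by auto
    then have "b \<in> A1" "b \<in> A2" by (simp_all add: representation_ne_zero)
    then show "representation B x b *s b \<in> span (A1 \<inter> A2)"
      by (intro span_scale span_base) simp
  qed
  finally show ?thesis .
qed

lemma range_subspace: "Vector_Spaces.linear scale scale f \<Longrightarrow> span (range f) = range f"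
  using lin_img[of f UNIV] by simp

end

context finite_dimensional_vector_space begin

lemma basis_from_span:
  assumes sp: "span (w ` {..d}) = UNIV" and dm: "dim (UNIV :: 'b set) = d + 1"
  shows "inj_on w {..d} \<and> independent (w ` {..d})"
proof -
  have "dim (UNIV :: 'b set) \<le> card (w ` {..d})" using sp by (intro dim_le_card) auto
  moreover have "card (w ` {..d}) \<le> card {..d}" by (rule card_image_le) simp
  ultimately have c: "card (w ` {..d}) = card {..d}" using dm by simp
  then have "inj_on w {..d}" by (intro eq_card_imp_inj_on) auto
  moreover have "independent (w ` {..d})"
  proof (rule card_le_dim_spanning[of _ UNIV])
    show "card (w ` {..d}) \<le> dim (UNIV :: 'b set)" using c dm by simp
  qed (use sp in auto)
  ultimately show ?thesis by simp
qed

lemma dim1_nonzero: "dim S = 1 \<Longrightarrow> S \<noteq> {0}"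
  by auto

lemma forward:
  assumes linX: "Vector_Spaces.linear scale scale X" and linY: "Vector_Spaces.linear scale scale Y"
    and dm: "dim (UNIV :: 'b set) = d + 1"
    and LR: "LR_pair scale d X Y"
  shows "is_Nil d X \<and> is_Nil d Y \<and> raises_flag d Y (flag_of d X) \<and> raises_flag d X (flag_of d Y)"
proof -
  obtain W where dec: "is_decomposition scale d W" and low: "lowers_dec d X W" and rai: "raises_dec d Y W"
    using LR unfolding LR_pair_def by blast
  have Wsub: "\<And>i. i \<le> d \<Longrightarrow> subspace (W i)" and Wdim: "\<And>i. i \<le> d \<Longrightarrow> dim (W i) = 1"
    and Wspan: "span (\<Union>i\<le>d. W i) = UNIV"
    using dec unfolding is_decomposition_def by auto
  have low1: "\<And>i. 1 \<le> i \<Longrightarrow> i \<le> d \<Longrightarrow> X ` W i = W (i - 1)" and low0: "X ` W 0 = {0}"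
    using low unfolding lowers_dec_def by auto
  have rai1: "\<And>i. i < d \<Longrightarrow> Y ` W i = W (i + 1)" and raid: "Y ` W d = {0}"
    using rai unfolding raises_dec_def by auto
  obtain B where B: "B \<subseteq> W 0" "independent B" "W 0 \<subseteq> span B" "card B = dim (W 0)"
    using basis_exists by blast
  have "card B = 1" using B(4) Wdim[of 0] by simp
  then obtain b where Bb: "B = {b}" by (auto simp: card_1_singleton_iff)
  have b0: "b \<noteq> 0" using B(2) Bb by simp
  have W0: "W 0 = span {b}" using span_subspace[OF B(1) B(3) Wsub[of 0]] Bb by simp
  define w where "w i = (Y ^^ i) b" for i
  have Ww: "i \<le> d \<Longrightarrow> W i = span {w i} \<and> w i \<noteq> 0" for i
  proof (induction i)
    case 0 then show ?case using W0 b0 by (simp add: w_def)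
  next
    case (Suc i)
    then have "W (Suc i) = Y ` W i" using rai1[of i] by simp
    also have "\<dots> = span {w (Suc i)}" using Suc by (simp add: lin_img[OF linY] w_def)
    finally have e: "W (Suc i) = span {w (Suc i)}" .
    have "w (Suc i) \<noteq> 0"
    proof
      assume "w (Suc i) = 0"
      then have "W (Suc i) = {0}" using e by simp
      then show False using Wdim[OF Suc.prems] by simp
    qed
    with e show ?case by simp
  qed
  have "span (\<Union>i\<le>d. W i) \<subseteq> span (w ` {..d})"
  proof (rule span_minimal)
    show "(\<Union>i\<le>d. W i) \<subseteq> span (w ` {..d})"
    proof
      fix x assume "x \<in> (\<Union>i\<le>d. W i)"
      then obtain i where i: "i \<le> d" "x \<in> span {w i}" using Ww by auto
      have "span {w i} \<subseteq> span (w ` {..d})" using i by (intro span_mono) auto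
      then show "x \<in> span (w ` {..d})" using i by auto
    qed
  qed simp
  then have spw: "span (w ` {..d}) = UNIV" using Wspan by auto
  note bi = basis_from_span[OF spw dm]
  have Xc: "\<exists>k. k \<noteq> 0 \<and> X (w i) = k *s w (i - 1)" if i: "1 \<le> i" "i \<le> d" for i
  proof -
    have "X (w i) \<in> X ` W i" using Ww[OF i(2)] by (auto intro: span_base)
    then have "X (w i) \<in> span {w (i - 1)}" using low1[OF i] Ww[of "i - 1"] i by simp
    then obtain k where k: "X (w i) = k *s w (i - 1)" by (auto simp: span_singleton)
    have "k \<noteq> 0"
    proof
      assume "k = 0"
      then have "X ` W i = {0}" using k Ww[OF i(2)] by (simp add: lin_img[OF linX])
      then have "span {w (i - 1)} = {0}" using low1[OF i] Ww[of "i - 1"] i by simp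
      then show False using Ww[of "i - 1"] i span_base[of "w (i - 1)" "{w (i - 1)}"] by auto
    qed
    with k show ?thesis by blast
  qed
  define c where "c i = (SOME k. k \<noteq> 0 \<and> X (w i) = k *s w (i - 1))" for i
  have Xw: "1 \<le> i \<Longrightarrow> i \<le> d \<Longrightarrow> c i \<noteq> 0 \<and> X (w i) = c i *s w (i - 1)" for i
    unfolding c_def by (rule someI_ex) (rule Xc)
  have Yd: "Y (w d) = 0" using raid Ww[of d] by (auto intro: span_base)
  have X0: "X (w 0) = 0" using low0 Ww[of 0] by (auto intro: span_base)
  interpret bd: bdata scale Basis d X Y w c
  proof (rule bdata.intro[OF finite_dimensional_vector_space_axioms], rule bdata_axioms.intro)
    show "\<And>i. i < d \<Longrightarrow> Y (w i) = w (Suc i)" by (simp add: w_def)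
    show "\<And>i. 1 \<le> i \<Longrightarrow> i \<le> d \<Longrightarrow> X (w i) = c i *s w (i - 1)" using Xw by blast
    show "\<And>i. 1 \<le> i \<Longrightarrow> i \<le> d \<Longrightarrow> c i \<noteq> 0" using Xw by blast
  qed (use linX linY bi spw Yd X0 in auto)
  show ?thesis using bd.NilX bd.NilY bd.raisesYX bd.raisesXY by simp
qed

end

lemma rng_suc: "range (f ^^ Suc n) = f ` range (f ^^ n)"
  by (simp only: funpow.simps(2) image_comp)

context finite_dimensional_vector_space begin

lemma backward:
  assumes linX: "Vector_Spaces.linear scale scale X" and linY: "Vector_Spaces.linear scale scale Y"
    and dm: "dim (UNIV :: 'b set) = d + 1"
    and NX: "is_Nil d X" and NY: "is_Nil d Y"
    and rYX: "raises_flag d Y (flag_of d X)" and rXY: "raises_flag d X (flag_of d Y)"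
  shows "LR_pair scale d X Y"
proof -
  have X1: "X ^^ (d + 1) = (\<lambda>_. 0)" and X2: "X ^^ d \<noteq> (\<lambda>_. 0)" using NX by (auto simp: is_Nil_def)
  have Y1: "Y ^^ (d + 1) = (\<lambda>_. 0)" using NY by (auto simp: is_Nil_def)
  have sub: "subspace (range (X ^^ k))" for k
    using range_subspace[OF lin_pow[OF linX], of k] span_eq_iff by metis
  have strict: "range (X ^^ Suc k) \<subset> range (X ^^ k)" if k: "k \<le> d" for k
  proof
    show "range (X ^^ Suc k) \<subseteq> range (X ^^ k)"
    proof
      fix x assume "x \<in> range (X ^^ Suc k)"
      then obtain y where "x = (X ^^ Suc k) y" by auto
      then have "x = (X ^^ k) (X y)" by (simp only: funpow_Suc_right comp_apply)
      then show "x \<in> range (X ^^ k)" by auto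
    qed
    show "range (X ^^ Suc k) \<noteq> range (X ^^ k)"
    proof
      assume eq: "range (X ^^ Suc k) = range (X ^^ k)"
      have m: "range (X ^^ (k + m)) = range (X ^^ k)" for m
      proof (induction m)
        case 0 then show ?case by simp
      next
        case (Suc m)
        have "range (X ^^ (k + Suc m)) = X ` range (X ^^ (k + m))"
          using rng_suc[where f = X and n = "k + m"] by simp
        also have "\<dots> = X ` range (X ^^ k)" using Suc by simp
        also have "\<dots> = range (X ^^ k)" using eq rng_suc[where f = X and n = k] by simp
        finally show ?case .
      qed
      have "range (X ^^ (d + 1)) = range (X ^^ k)" using m[of "d + 1 - k"] k by simp
      moreover have "range (X ^^ (d + 1)) = {0}" by (simp only: X1) auto
      ultimately have "range (X ^^ k) = {0}" by simp
      then have k0: "(X ^^ k) y = 0" for y by auto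
      have "(X ^^ d) y = 0" for y
      proof -
        have "(X ^^ d) y = (X ^^ (d - k)) ((X ^^ k) y)"
          using k funpow_add[of "d - k" k X] by simp
        then show ?thesis using k0 lin_0[OF lin_pow[OF linX]] by simp
      qed
      then show False using X2 by auto
    qed
  qed
  have dimr: "dim (range (X ^^ j)) + j \<le> d + 1" if "j \<le> d" for j
    using that
  proof (induction j)
    case 0 then show ?case using dm by simp
  next
    case (Suc j)
    have "span (range (X ^^ Suc j)) \<subset> span (range (X ^^ j))"
      unfolding range_subspace[OF lin_pow[OF linX], of "Suc j"] range_subspace[OF lin_pow[OF linX], of j]
      using strict[of j] Suc.prems by simp
    then have "dim (range (X ^^ Suc j)) < dim (range (X ^^ j))" by (rule dim_psubset)
    then show ?case using Suc by simp
  qed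
  obtain v where v: "(X ^^ d) v \<noteq> 0" using X2 by auto
  define u0 where "u0 = (X ^^ d) v"
  have U0: "range (X ^^ d) = span {u0}"
  proof -
    have s: "span {u0} \<subseteq> range (X ^^ d)"
      by (rule span_minimal) (auto simp: u0_def sub)
    have "dim (range (X ^^ d)) \<le> 1" using dimr[of d] by simp
    also have "\<dots> = dim (span {u0})" using v by (simp add: u0_def)
    finally have "span {u0} = range (X ^^ d)"
      by (intro subspace_dim_equal s sub subspace_span)
    then show ?thesis by simp
  qed
  define w where "w i = (Y ^^ i) u0" for i
  have wS: "Y (w i) = w (Suc i)" for i by (simp add: w_def)
  have flX: "i \<le> d \<Longrightarrow> flag_of d X i = span (w ` {..i})" for i
  proof (induction i)
    case 0 then show ?case using U0 by (simp add: flag_of_def w_def)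
  next
    case (Suc i)
    have "flag_of d X (Suc i) = subspace_sum (flag_of d X i) (Y ` flag_of d X i)"
      using rYX Suc.prems unfolding raises_flag_def by simp
    also have "\<dots> = span (w ` {..i} \<union> Y ` w ` {..i})"
      using Suc by (simp add: subspace_sum_span[OF linY])
    also have "w ` {..i} \<union> Y ` w ` {..i} = w ` {..Suc i}"
    proof (intro equalityI subsetI)
      fix x assume "x \<in> w ` {..i} \<union> Y ` w ` {..i}"
      then show "x \<in> w ` {..Suc i}" by (auto simp: wS)
    next
      fix x assume "x \<in> w ` {..Suc i}"
      then obtain j where j: "j \<le> Suc i" "x = w j" by auto
      show "x \<in> w ` {..i} \<union> Y ` w ` {..i}"
      proof (cases "j = Suc i")
        case True
        then have "x = Y (w i)" using j wS by simp
        then show ?thesis by blast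
      next
        case False then show ?thesis using j by auto
      qed
    qed
    finally show ?case .
  qed
  have spw: "span (w ` {..d}) = UNIV" using flX[of d] by (simp add: flag_of_def)
  note bi = basis_from_span[OF spw dm]
  have Yw: "(Y ^^ k) (w i) = w (k + i)" for k i
    by (simp add: w_def funpow_add)
  have Y0: "d < n \<Longrightarrow> (Y ^^ n) u0 = 0" for n
  proof -
    assume n: "d < n"
    have nn: "n = (n - (d + 1)) + (d + 1)" using n by simp
    have e: "(Y ^^ n) u0 = (Y ^^ (n - (d + 1))) ((Y ^^ (d + 1)) u0)"
      by (subst nn) (simp only: funpow_add comp_apply)
    have z: "(Y ^^ (d + 1)) u0 = 0" by (simp only: Y1)
    show ?thesis unfolding e z by (rule lin_0[OF lin_pow[OF linY]])
  qed
  have rangeY: "range (Y ^^ k) = span (w ` {k..d})" if k: "k \<le> d" for k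
  proof -
    have "range (Y ^^ k) = (Y ^^ k) ` span (w ` {..d})" by (simp add: spw)
    also have "\<dots> = span ((Y ^^ k) ` w ` {..d})" using lin_pow[OF linY] by (simp add: lin_img)
    also have "\<dots> = span (w ` {k..d})"
    proof (unfold span_eq, intro conjI subsetI)
      fix x assume "x \<in> (Y ^^ k) ` w ` {..d}"
      then obtain i where i: "i \<le> d" "x = (Y ^^ k) (w i)" by auto
      show "x \<in> span (w ` {k..d})"
      proof (cases "k + i \<le> d")
        case True
        then have "x = w (k + i)" using i Yw by simp
        moreover have "k + i \<in> {k..d}" using True by simp
        ultimately show ?thesis by (auto intro!: span_base)
      next
        case False then have "x = 0" using Y0 i Yw by (simp add: w_def)
        then show ?thesis by (simp add: span_zero)
      qed
    next
      fix x assume "x \<in> w ` {k..d}"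
      then obtain j where j: "k \<le> j" "j \<le> d" "x = w j" by auto
      have "x = (Y ^^ k) (w (j - k))" using Yw[of k "j - k"] j by simp
      then show "x \<in> span ((Y ^^ k) ` w ` {..d})" using j by (intro span_base) auto
    qed
    finally show ?thesis .
  qed
  have flY: "i \<le> d \<Longrightarrow> flag_of d Y i = span (w ` {d - i..d})" for i
    using rangeY[of "d - i"] by (simp add: flag_of_def)
  have inX: "X (w j) \<in> span (w ` {..j - 1})" if j: "1 \<le> j" "j \<le> d" for j
  proof -
    have "w j \<in> flag_of d X j" using flX[OF j(2)] by (auto intro: span_base)
    then obtain z where z: "w j = (X ^^ (d - j)) z" by (auto simp: flag_of_def)
    have "X (w j) = (X ^^ (d - (j - 1))) z"
    proof -
      have "d - (j - 1) = Suc (d - j)" using j by simp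
      then show ?thesis using z by simp
    qed
    then have "X (w j) \<in> flag_of d X (j - 1)" by (simp add: flag_of_def)
    then show ?thesis using flX[of "j - 1"] j by simp
  qed
  have inY: "X (w j) \<in> span (w ` {j - 1..d})" if j: "1 \<le> j" "j \<le> d" for j
  proof -
    have i: "d - j < d" using j by simp
    have e1: "flag_of d Y (d - j) = span (w ` {j..d})" using flY[of "d - j"] j by simp
    have "j \<in> {j..d}" using j by simp
    then have "w j \<in> span (w ` {j..d})" by (intro span_base) (rule imageI)
    then have "X (w j) \<in> X ` flag_of d Y (d - j)" unfolding e1 by (rule imageI)
    moreover have "0 \<in> flag_of d Y (d - j)" unfolding e1 by (rule span_zero)
    ultimately have "0 + X (w j) \<in> subspace_sum (flag_of d Y (d - j)) (X ` flag_of d Y (d - j))"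
      unfolding subspace_sum_def by blast
    then have "X (w j) \<in> subspace_sum (flag_of d Y (d - j)) (X ` flag_of d Y (d - j))" by simp
    moreover have "subspace_sum (flag_of d Y (d - j)) (X ` flag_of d Y (d - j)) = flag_of d Y (d - j + 1)"
      using rXY i unfolding raises_flag_def by blast
    moreover have "d - (d - j + 1) = j - 1" using j by simp
    moreover have "flag_of d Y (d - j + 1) = span (w ` {d - (d - j + 1)..d})" using flY[of "d - j + 1"] j by simp
    ultimately show ?thesis by simp
  qed
  have Xk: "\<exists>k. X (w j) = k *s w (j - 1)" if j: "1 \<le> j" "j \<le> d" for j
  proof -
    have "X (w j) \<in> span (w ` {..j - 1} \<inter> w ` {j - 1..d})"
      by (rule span_Int_indep[OF conjunct2[OF bi] _ _ inX[OF j] inY[OF j]]) (use j in auto)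
    moreover have "w ` {..j - 1} \<inter> w ` {j - 1..d} = {w (j - 1)}"
    proof (intro equalityI subsetI)
      fix x assume "x \<in> w ` {..j - 1} \<inter> w ` {j - 1..d}"
      then obtain a b where ab: "a \<le> j - 1" "j - 1 \<le> b" "b \<le> d" "x = w a" "x = w b" by auto
      then have "a = b" using conjunct1[OF bi] j by (auto dest: inj_onD)
      then show "x \<in> {w (j - 1)}" using ab by simp
    qed (use j in auto)
    ultimately show ?thesis by (auto simp: span_singleton)
  qed
  have Xnz: "X (w j) \<noteq> 0" if j: "1 \<le> j" "j \<le> d" for j
  proof
    assume X0: "X (w j) = 0"
    let ?A = "w ` {j..d}"
    have "?A \<union> X ` ?A \<subseteq> span ?A"
    proof
      fix x assume "x \<in> ?A \<union> X ` ?A"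
      then show "x \<in> span ?A"
      proof
        assume "x \<in> ?A" then show ?thesis by (rule span_base)
      next
        assume "x \<in> X ` ?A"
        then obtain l where l: "j \<le> l" "l \<le> d" "x = X (w l)" by auto
        show ?thesis
        proof (cases "l = j")
          case True then show ?thesis using X0 l by (simp add: span_zero)
        next
          case False
          obtain k where "X (w l) = k *s w (l - 1)" using Xk[of l] l j by auto
          moreover have "l - 1 \<in> {j..d}" using l False by auto
          then have "w (l - 1) \<in> span ?A" by (intro span_base) (rule imageI)
          ultimately show ?thesis using l by (simp add: span_scale)
        qed
      qed
    qed
    then have s1: "span (?A \<union> X ` ?A) \<subseteq> span ?A" by (intro span_minimal) auto
    have "flag_of d Y (d - j + 1) = subspace_sum (flag_of d Y (d - j)) (X ` flag_of d Y (d - j))"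
      using rXY j unfolding raises_flag_def by simp
    also have "\<dots> = span (?A \<union> X ` ?A)" using flY[of "d - j"] j by (simp add: subspace_sum_span[OF linX])
    finally have "flag_of d Y (d - j + 1) \<subseteq> span ?A" using s1 by simp
    moreover have "d - (d - j + 1) = j - 1" using j by simp
    ultimately have "span (w ` {j - 1..d}) \<subseteq> span ?A" using flY[of "d - j + 1"] j by simp
    moreover have "j - 1 \<in> {j - 1..d}" using j by auto
    then have "w (j - 1) \<in> span (w ` {j - 1..d})" by (intro span_base) (rule imageI)
    ultimately have "w (j - 1) \<in> span ?A" by blast
    moreover have "?A \<subseteq> w ` {..d} - {w (j - 1)}"
    proof
      fix x assume "x \<in> ?A"
      then obtain l where l: "j \<le> l" "l \<le> d" "x = w l" by auto
      have "w l \<noteq> w (j - 1)" using conjunct1[OF bi] l j by (auto dest: inj_onD)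
      then show "x \<in> w ` {..d} - {w (j - 1)}" using l by auto
    qed
    ultimately have "w (j - 1) \<in> span (w ` {..d} - {w (j - 1)})" using span_mono by blast
    then show False using conjunct2[OF bi] j unfolding dependent_def by auto
  qed
  define c where "c j = (SOME k. X (w j) = k *s w (j - 1))" for j
  have Xw: "X (w j) = c j *s w (j - 1) \<and> c j \<noteq> 0" if j: "1 \<le> j" "j \<le> d" for j
  proof -
    have "X (w j) = c j *s w (j - 1)" unfolding c_def by (rule someI_ex) (rule Xk[OF j])
    then show ?thesis using Xnz[OF j] by auto
  qed
  have Yd: "Y (w d) = 0" using Y0[of "Suc d"] by (simp add: w_def)
  have "(X ^^ (d + 1)) v = 0" by (simp only: X1)
  then have X0: "X (w 0) = 0" by (simp add: w_def u0_def)
  interpret bd: bdata scale Basis d X Y w c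
  proof (rule bdata.intro[OF finite_dimensional_vector_space_axioms], rule bdata_axioms.intro)
    show "\<And>i. i < d \<Longrightarrow> Y (w i) = w (Suc i)" by (simp add: wS)
    show "\<And>i. 1 \<le> i \<Longrightarrow> i \<le> d \<Longrightarrow> X (w i) = c i *s w (i - 1)" using Xw by blast
    show "\<And>i. 1 \<le> i \<Longrightarrow> i \<le> d \<Longrightarrow> c i \<noteq> 0" using Xw by blast
  qed (use linX linY bi spw Yd X0 in auto)
  show ?thesis by (rule bd.LR)
qed

end

theorem theorem34p3:
  fixes scale :: "'f::field \<Rightarrow> 'v::ab_group_add \<Rightarrow> 'v"
    and d :: nat and A B C :: "'v \<Rightarrow> 'v"
  assumes "vector_space scale"
    and "vector_space.dim scale (UNIV :: 'v set) = d + 1"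
    and "Vector_Spaces.linear scale scale A"
    and "Vector_Spaces.linear scale scale B"
    and "Vector_Spaces.linear scale scale C"
  shows "LR_triple scale d A B C \<longleftrightarrow>
    (is_Nil d A \<and> is_Nil d B \<and> is_Nil d C) \<and>
    (raises_flag d B (flag_of d A) \<and> raises_flag d C (flag_of d A)) \<and>
    (raises_flag d C (flag_of d B) \<and> raises_flag d A (flag_of d B)) \<and>
    (raises_flag d A (flag_of d C) \<and> raises_flag d B (flag_of d C))"
proof -
  interpret vs: vector_space scale by fact
  obtain Bs where Bs: "Bs \<subseteq> UNIV" "vs.independent Bs" "UNIV \<subseteq> vs.span Bs" "card Bs = vs.dim (UNIV :: 'v set)"
    using vs.basis_exists by blast
  have fin: "finite Bs" using Bs(4) assms(2) card.infinite by force
  interpret fd: finite_dimensional_vector_space scale Bs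
    by unfold_locales (use fin Bs in auto)
  have pair: "LR_pair scale d X Y \<longleftrightarrow> is_Nil d X \<and> is_Nil d Y \<and> raises_flag d Y (flag_of d X) \<and> raises_flag d X (flag_of d Y)"
    if "Vector_Spaces.linear scale scale X" "Vector_Spaces.linear scale scale Y" for X Y
    using fd.forward[OF that assms(2)] fd.backward[OF that assms(2)] by blast
  show ?thesis unfolding LR_triple_def
    using pair[OF assms(3) assms(4)] pair[OF assms(4) assms(3)] pair[OF assms(4) assms(5)]
      pair[OF assms(5) assms(4)] pair[OF assms(3) assms(5)] pair[OF assms(5) assms(3)]
    by blast
qed

end
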